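(* Let $\mathcal{L},\tilde{\mathcal{L}}$ be distributions on $[0,\infty]$ satisfying: (H1) $\mathcal{L}$ is useful; (H2) $\mathcal{L}([0,\infty))>p_c$ and $\tilde{\mathcal{L}}([0,\infty))>p_c$; (H3) $\mathcal{L}\ne\tilde{\mathcal{L}}$; and let $(\tau,\tilde\tau)$ be a pair of random variables with marginals $\mathcal{L},\tilde{\mathcal{L}}$ and $\mathbb{E}[\tilde\tau\mid\tau]\le\tau$. Assume moreover that $\mathbb{P}(\mathbb{E}[\tilde\tau\mid\tau]=\tau)=1$ and $\{\tau<\infty\}=\{\tilde\tau<\infty\}$ almost surely. Then there exist $\beta>0$ and $\delta>0$ such that \[\mathbb{P}\big(\tau<\infty,\ \mathbb{P}(\tilde\tau\le\tau-2\delta\mid\tau)\ge\beta,\ \mathbb{P}(\tilde\tau\ge\tau\mid\tau)\ge\beta\big)>0.\]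
   Context: $p_c$ / $\overrightarrow{p_c}$: critical probabilities of Bernoulli / oriented Bernoulli bond percolation on $\mathbb{Z}^d$, $d\ge2$. With $t_{\min}$ the minimum of the support of $\mathcal{L}$, $\mathcal{L}$ is useful if $\mathcal{L}(\{t_{\min}\})<p_c$ when $t_{\min}=0$ and $<\overrightarrow{p_c}$ when $t_{\min}>0$. *)

theory Defs
  imports "HOL-Probability.Probability"
begin

definition nn :: "int ^ 'd \<Rightarrow> int ^ 'd \<Rightarrow> bool" where
  "nn x y \<longleftrightarrow> (\<Sum>i\<in>UNIV. \<bar>x $ i - y $ i\<bar>) = 1"

definition unitv :: "'d \<Rightarrow> int ^ 'd" where
  "unitv i = (\<chi> j. if j = i then 1 else 0)"

definition bonds :: "'d::finite itself \<Rightarrow> (int ^ 'd) set set" where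
  "bonds _ = {{x, y} | x y. nn x y}"

definition obonds :: "'d::finite itself \<Rightarrow> ((int ^ 'd) \<times> (int ^ 'd)) set" where
  "obonds _ = {(x, x + unitv i) | x i. True}"

definition perc_measure :: "'d::finite itself \<Rightarrow> real \<Rightarrow> ((int ^ 'd) set \<Rightarrow> bool) measure" where
  "perc_measure D p = PiM (bonds D) (\<lambda>_. measure_pmf (bernoulli_pmf p))"

definition open_cluster :: "((int ^ 'd) set \<Rightarrow> bool) \<Rightarrow> int ^ 'd \<Rightarrow> (int ^ 'd) set" where
  "open_cluster \<omega> x = {y. (x, y) \<in> {(u, v). nn u v \<and> \<omega> {u, v}}\<^sup>*}"

definition theta :: "'d::finite itself \<Rightarrow> real \<Rightarrow> real" where
  "theta D p = measure (perc_measure D p)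
     {\<omega> \<in> space (perc_measure D p). infinite (open_cluster \<omega> 0)}"

definition p_c :: "'d::finite itself \<Rightarrow> real" where
  "p_c D = Sup {p \<in> {0..1}. theta D p = 0}"

definition operc_measure :: "'d::finite itself \<Rightarrow> real \<Rightarrow> ((int ^ 'd) \<times> (int ^ 'd) \<Rightarrow> bool) measure" where
  "operc_measure D p = PiM (obonds D) (\<lambda>_. measure_pmf (bernoulli_pmf p))"

definition oopen_cluster :: "'d::finite itself \<Rightarrow> ((int ^ 'd) \<times> (int ^ 'd) \<Rightarrow> bool) \<Rightarrow> int ^ 'd \<Rightarrow> (int ^ 'd) set" where
  "oopen_cluster D \<omega> x = {y. (x, y) \<in> {e. e \<in> obonds D \<and> \<omega> e}\<^sup>*}"

definition otheta :: "'d::finite itself \<Rightarrow> real \<Rightarrow> real" where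
  "otheta D p = measure (operc_measure D p)
     {\<omega> \<in> space (operc_measure D p). infinite (oopen_cluster D \<omega> 0)}"

definition op_c :: "'d::finite itself \<Rightarrow> real" where
  "op_c D = Sup {p \<in> {0..1}. otheta D p = 0}"

definition support :: "ennreal measure \<Rightarrow> ennreal set" where
  "support L = {t. \<forall>U. open U \<and> t \<in> U \<longrightarrow> emeasure L U > 0}"

definition t_min :: "ennreal measure \<Rightarrow> ennreal" where
  "t_min L = Inf (support L)"

definition useful :: "'d::finite itself \<Rightarrow> ennreal measure \<Rightarrow> bool" where
  "useful D L \<longleftrightarrow>
     (if t_min L = 0 then measure L {t_min L} < p_c D
      else measure L {t_min L} < op_c D)"

definition cond_exp_given :: "'a measure \<Rightarrow> ('a \<Rightarrow> ennreal) \<Rightarrow> ('a \<Rightarrow> ennreal) \<Rightarrow> 'a \<Rightarrow> ennreal" where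
  "cond_exp_given M \<tau> f = nn_cond_exp M (vimage_algebra (space M) \<tau> borel) f"

end

theory Submission
  imports Defs
begin

lemma ennreal_small_zero:
  fixes y :: ennreal
  assumes "\<And>n. n \<ge> K \<Longrightarrow> y \<le> ennreal (1 / real (Suc n))"
  shows "y = 0"
proof -
  have "y \<le> 0"
  proof (rule ennreal_le_epsilon)
    fix e :: real assume e: "0 < e"
    obtain n0 :: nat where n0: "n0 > 0" "inverse (real n0) < e"
      using ex_inverse_of_nat_less[OF e] by auto
    have "1 / real (Suc (K + n0)) \<le> inverse (real n0)"
      using n0 by (simp add: divide_simps)
    hence "ennreal (1 / real (Suc (K + n0))) \<le> ennreal e"
      using n0 by (intro ennreal_leI) linarith
    thus "y \<le> 0 + ennreal e" using assms[of "K + n0"] by simp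
  qed
  thus ?thesis by simp
qed

lemma ennreal_pos_ex:
  fixes h :: ennreal
  assumes "h \<noteq> 0"
  shows "\<exists>N. ennreal (1 / real (Suc N)) \<le> h"
proof (cases h rule: ennreal_cases)
  case (real r)
  then have r: "r > 0" using assms by auto
  obtain n0 :: nat where n0: "n0 > 0" "inverse (real n0) < r"
    using ex_inverse_of_nat_less[OF r] by auto
  have "1 / real (Suc n0) \<le> inverse (real n0)"
    using n0 by (simp add: divide_simps)
  then show ?thesis using real n0 by (intro exI[of _ n0]) (simp add: ennreal_leI)
next
  case top
  then show ?thesis by simp
qed

lemma two_eps:
  assumes "0 < e"
  shows "\<exists>m. 2 * ennreal (1 / real (Suc m)) \<le> ennreal e"
proof -
  obtain n0 :: nat where n0: "n0 > 0" "inverse (real n0) < e / 2"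
    using ex_inverse_of_nat_less[of "e/2"] assms by auto
  have "1 / real (Suc n0) \<le> inverse (real n0)"
    using n0 by (simp add: divide_simps)
  hence "2 * (1 / real (Suc n0)) \<le> e" using n0 by linarith
  hence "ennreal (2 * (1 / real (Suc n0))) \<le> ennreal e" by (rule ennreal_leI)
  moreover have "ennreal (2 * (1 / real (Suc n0))) = ennreal 2 * ennreal (1 / real (Suc n0))"
    by (rule ennreal_mult) auto
  ultimately show ?thesis by (intro exI[of _ n0]) simp
qed

theorem lemma3p2:
  fixes M :: "'a measure" and \<tau> \<tau>' :: "'a \<Rightarrow> ennreal" and L L' :: "ennreal measure"
  assumes d2: "CARD('d::finite) \<ge> 2"
    and P: "prob_space M"
    and meas: "\<tau> \<in> borel_measurable M" "\<tau>' \<in> borel_measurable M"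
    and marg: "distr M borel \<tau> = L" "distr M borel \<tau>' = L'"
    and H1: "useful TYPE('d) L"
    and H2: "measure L {..<\<infinity>} > p_c TYPE('d)" "measure L' {..<\<infinity>} > p_c TYPE('d)"
    and H3: "L \<noteq> L'"
    and le: "AE x in M. cond_exp_given M \<tau> \<tau>' x \<le> \<tau> x"
    and eq: "AE x in M. cond_exp_given M \<tau> \<tau>' x = \<tau> x"
    and fin: "AE x in M. (\<tau> x < \<infinity>) = (\<tau>' x < \<infinity>)"
  shows "\<exists>\<beta>::real. \<beta> > 0 \<and> (\<exists>\<delta>::real. \<delta> > 0 \<and>
     measure M {x \<in> space M. \<tau> x < \<infinity>
        \<and> cond_exp_given M \<tau> (indicator {y \<in> space M. \<tau>' y + 2 * ennreal \<delta> \<le> \<tau> y}) x \<ge> ennreal \<beta>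
        \<and> cond_exp_given M \<tau> (indicator {y \<in> space M. \<tau>' y \<ge> \<tau> y}) x \<ge> ennreal \<beta>} > 0)"
proof (rule ccontr)
  assume neg: "\<not> ?thesis"
  interpret prob_space M by (rule P)
  define F where "F = vimage_algebra (space M) \<tau> borel"
  note [measurable] = meas
  have subalg: "subalgebra M F"
    unfolding subalgebra_def F_def
    by (auto simp: sets_vimage_algebra2 intro: measurable_sets[OF meas(1)])
  interpret S: finite_measure_subalgebra M F
    by unfold_locales (rule subalg)
  have tF[measurable]: "\<tau> \<in> borel_measurable F"
    unfolding F_def by (rule measurable_vimage_algebra1) auto
  have spF: "space F = space M" unfolding F_def by simp
  define g where "g n = nn_cond_exp M F (indicator {y \<in> space M. \<tau>' y + 2 * ennreal (1 / real (Suc n)) \<le> \<tau> y})" for n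
  define h where "h = nn_cond_exp M F (indicator {y \<in> space M. \<tau>' y \<ge> \<tau> y})"
  have gF[measurable]: "g n \<in> borel_measurable F" "g n \<in> borel_measurable M" for n
    unfolding g_def by measurable
  have hF[measurable]: "h \<in> borel_measurable F" "h \<in> borel_measurable M"
    unfolding h_def by measurable
  have ce: "cond_exp_given M \<tau> f = nn_cond_exp M F f" for f
    unfolding cond_exp_given_def F_def by simp
  define Sn where "Sn n = {x \<in> space M. \<tau> x < \<infinity> \<and> g n x \<ge> ennreal (1 / real (Suc n))
       \<and> h x \<ge> ennreal (1 / real (Suc n))}" for n
  have Sn_meas[measurable]: "Sn n \<in> sets M" for n unfolding Sn_def by measurable
  have "measure M (Sn n) = 0" for n
  proof -
    have "\<not> measure M (Sn n) > 0"
    proof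
      assume "measure M (Sn n) > 0"
      hence "\<exists>\<beta>::real. \<beta> > 0 \<and> (\<exists>\<delta>::real. \<delta> > 0 \<and>
       measure M {x \<in> space M. \<tau> x < \<infinity>
        \<and> cond_exp_given M \<tau> (indicator {y \<in> space M. \<tau>' y + 2 * ennreal \<delta> \<le> \<tau> y}) x \<ge> ennreal \<beta>
        \<and> cond_exp_given M \<tau> (indicator {y \<in> space M. \<tau>' y \<ge> \<tau> y}) x \<ge> ennreal \<beta>} > 0)"
        unfolding Sn_def g_def h_def ce
        by (intro exI[of _ "1 / real (Suc n)"] conjI) auto
      thus False using neg by blast
    qed
    thus ?thesis by (simp add: not_less measure_le_0_iff)
  qed
  hence "AE x in M. x \<notin> Sn n" for n
    by (intro AE_not_in) (simp add: null_sets_def emeasure_eq_measure)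
  hence AE1: "AE x in M. \<forall>n. x \<notin> Sn n" by (simp add: AE_all_countable)
  have AE2: "AE x in M. \<forall>m n. m \<le> n \<longrightarrow> g m x \<le> g n x"
  proof -
    have "AE x in M. m \<le> n \<longrightarrow> g m x \<le> g n x" for m n
    proof (cases "m \<le> n")
      case True
      have "AE x in M. indicator {y \<in> space M. \<tau>' y + 2 * ennreal (1 / real (Suc m)) \<le> \<tau> y} x
          \<le> (indicator {y \<in> space M. \<tau>' y + 2 * ennreal (1 / real (Suc n)) \<le> \<tau> y} x :: ennreal)"
      proof (intro AE_I2)
        fix x
        have "ennreal (1 / real (Suc n)) \<le> ennreal (1 / real (Suc m))"
          using True by (intro ennreal_leI) (simp add: divide_simps)
        hence A: "\<tau>' x + 2 * ennreal (1 / real (Suc n)) \<le> \<tau>' x + 2 * ennreal (1 / real (Suc m))"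
          by (intro add_left_mono mult_left_mono) auto
        show "indicator {y \<in> space M. \<tau>' y + 2 * ennreal (1 / real (Suc m)) \<le> \<tau> y} x
          \<le> (indicator {y \<in> space M. \<tau>' y + 2 * ennreal (1 / real (Suc n)) \<le> \<tau> y} x :: ennreal)"
          unfolding indicator_def using order_trans[OF A] by auto
      qed
      hence "AE x in M. g m x \<le> g n x" unfolding g_def
        by (intro S.nn_cond_exp_mono) auto
      thus ?thesis by auto
    qed simp
    thus ?thesis by (simp add: AE_all_countable)
  qed
  have AE3: "AE x in M. \<tau> x < \<infinity> \<longrightarrow> h x = 0 \<or> (\<forall>m. g m x = 0)"
    using AE1 AE2 AE_space
  proof eventually_elim
    case (elim x)
    show ?case
    proof (intro impI)
      assume t: "\<tau> x < \<infinity>"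
      show "h x = 0 \<or> (\<forall>m. g m x = 0)"
      proof (cases "h x = 0")
      case hx: False
      obtain N where N: "ennreal (1 / real (Suc N)) \<le> h x" using ennreal_pos_ex[OF hx] by blast
      have "g m x = 0" for m
      proof (rule ennreal_small_zero[where K = "max m N"])
        fix n assume n: "max m N \<le> n"
        have "ennreal (1 / real (Suc n)) \<le> ennreal (1 / real (Suc N))"
          using n by (intro ennreal_leI) (simp add: divide_simps)
        with N have "ennreal (1 / real (Suc n)) \<le> h x" by order
        with elim(1) t elim(3) have "\<not> g n x \<ge> ennreal (1 / real (Suc n))"
          unfolding Sn_def by auto
        moreover have "g m x \<le> g n x" using elim(2) n by auto
        ultimately show "g m x \<le> ennreal (1 / real (Suc n))" by auto
      qed
      thus ?thesis by blast
      qed simp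
    qed
  qed
  have eqAE: "AE x in M. nn_cond_exp M F \<tau>' x = \<tau> x" using eq by (simp add: ce)
  define C where "C k = {x \<in> space M. \<tau> x \<le> of_nat k \<and> h x = 0}" for k :: nat
  define D where "D k = {x \<in> space M. \<tau> x \<le> of_nat k \<and> (\<forall>m. g m x = 0)}" for k :: nat
  have CF[measurable]: "C k \<in> sets F" for k unfolding C_def spF[symmetric] by measurable
  have CM[measurable]: "C k \<in> sets M" for k unfolding C_def by measurable
  have DF[measurable]: "D k \<in> sets F" for k unfolding D_def spF[symmetric] by measurable
  have DM[measurable]: "D k \<in> sets M" for k unfolding D_def by measurable
  have C0: "AE x in M. x \<notin> C k" for k
  proof -
    have i1: "(\<integral>\<^sup>+x. indicator (C k) x * indicator {y\<in>space M. \<tau>' y \<ge> \<tau> y} x \<partial>M)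
        = (\<integral>\<^sup>+x. indicator (C k) x * h x \<partial>M)"
      unfolding h_def by (rule S.nn_cond_exp_intg[symmetric]) measurable
    also have "\<dots> = (\<integral>\<^sup>+x. 0 \<partial>M)"
      by (rule nn_integral_cong) (auto simp: C_def indicator_def)
    finally have i1': "(\<integral>\<^sup>+x. indicator (C k) x * indicator {y\<in>space M. \<tau>' y \<ge> \<tau> y} x \<partial>M) = 0"
      by simp
    have m1: "(\<lambda>x. indicator (C k) x * indicator {y\<in>space M. \<tau>' y \<ge> \<tau> y} x :: ennreal) \<in> borel_measurable M"
      by measurable
    have "AE x in M. indicator (C k) x * indicator {y\<in>space M. \<tau>' y \<ge> \<tau> y} x = (0::ennreal)"
      using i1' nn_integral_0_iff_AE[OF m1] by simp
    then have AEc: "AE x in M. x \<in> C k \<longrightarrow> \<tau>' x < \<tau> x"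
      by eventually_elim (auto simp: indicator_def C_def split: if_splits)
    have i2: "(\<integral>\<^sup>+x. indicator (C k) x * \<tau>' x \<partial>M) = (\<integral>\<^sup>+x. indicator (C k) x * \<tau> x \<partial>M)"
    proof -
      have "(\<integral>\<^sup>+x. indicator (C k) x * \<tau>' x \<partial>M) = (\<integral>\<^sup>+x. indicator (C k) x * nn_cond_exp M F \<tau>' x \<partial>M)"
        by (rule S.nn_cond_exp_intg[symmetric]) measurable
      also have "\<dots> = (\<integral>\<^sup>+x. indicator (C k) x * \<tau> x \<partial>M)"
        by (rule nn_integral_cong_AE) (use eqAE in auto)
      finally show ?thesis .
    qed
    have i3: "(\<integral>\<^sup>+x. indicator (C k) x * \<tau> x \<partial>M) \<noteq> \<infinity>"
    proof -
      have "(\<integral>\<^sup>+x. indicator (C k) x * \<tau> x \<partial>M) \<le> (\<integral>\<^sup>+x. of_nat k \<partial>M)"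
        by (intro nn_integral_mono) (auto simp: C_def indicator_def)
      also have "\<dots> = of_nat k" by (simp add: emeasure_space_1)
      finally show ?thesis by (metis ennreal_of_nat_neq_top top_unique infinity_ennreal_def)
    qed
    show "AE x in M. x \<notin> C k"
    proof (rule ccontr)
      assume nC: "\<not> (AE x in M. x \<notin> C k)"
      have "(\<integral>\<^sup>+x. indicator (C k) x * \<tau>' x \<partial>M) < (\<integral>\<^sup>+x. indicator (C k) x * \<tau> x \<partial>M)"
      proof (rule nn_integral_less)
        show "(\<lambda>x. indicator (C k) x * \<tau>' x) \<in> borel_measurable M" by measurable
        show "(\<lambda>x. indicator (C k) x * \<tau> x) \<in> borel_measurable M" by measurable
        show "(\<integral>\<^sup>+x. indicator (C k) x * \<tau>' x \<partial>M) \<noteq> \<infinity>" using i2 i3 by simp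
        show "AE x in M. indicator (C k) x * \<tau>' x \<le> indicator (C k) x * \<tau> x"
          using AEc by eventually_elim (auto simp: indicator_def)
        show "\<not> (AE x in M. indicator (C k) x * \<tau> x \<le> indicator (C k) x * \<tau>' x)"
        proof
          assume "AE x in M. indicator (C k) x * \<tau> x \<le> indicator (C k) x * \<tau>' x"
          with AEc have "AE x in M. x \<notin> C k"
            by eventually_elim (auto simp: indicator_def split: if_splits)
          with nC show False by blast
        qed
      qed
      with i2 show False by simp
    qed
  qed
  have D0: "AE x in M. x \<in> D k \<longrightarrow> \<tau>' x = \<tau> x" for k
  proof -
    have Am: "AE x in M. x \<in> D k \<longrightarrow> \<not> (\<tau>' x + 2 * ennreal (1 / real (Suc m)) \<le> \<tau> x)" for m
    proof -
      have i1: "(\<integral>\<^sup>+x. indicator (D k) x * indicator {y \<in> space M. \<tau>' y + 2 * ennreal (1 / real (Suc m)) \<le> \<tau> y} x \<partial>M)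
          = (\<integral>\<^sup>+x. indicator (D k) x * g m x \<partial>M)"
        unfolding g_def by (rule S.nn_cond_exp_intg[symmetric]) measurable
      also have "\<dots> = (\<integral>\<^sup>+x. 0 \<partial>M)"
        by (rule nn_integral_cong) (auto simp: D_def indicator_def)
      finally have i1': "(\<integral>\<^sup>+x. indicator (D k) x * indicator {y \<in> space M. \<tau>' y + 2 * ennreal (1 / real (Suc m)) \<le> \<tau> y} x \<partial>M) = 0"
        by simp
      have m1: "(\<lambda>x. indicator (D k) x * indicator {y \<in> space M. \<tau>' y + 2 * ennreal (1 / real (Suc m)) \<le> \<tau> y} x :: ennreal) \<in> borel_measurable M"
        by measurable
      have "AE x in M. indicator (D k) x * indicator {y \<in> space M. \<tau>' y + 2 * ennreal (1 / real (Suc m)) \<le> \<tau> y} x = (0::ennreal)"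
        using i1' nn_integral_0_iff_AE[OF m1] by simp
      then show ?thesis
        by eventually_elim (auto simp: indicator_def D_def split: if_splits)
    qed
    have "AE x in M. \<forall>m. x \<in> D k \<longrightarrow> \<not> (\<tau>' x + 2 * ennreal (1 / real (Suc m)) \<le> \<tau> x)"
      by (rule AE_all_countable[THEN iffD2]) (use Am in blast)
    hence AEd: "AE x in M. x \<in> D k \<longrightarrow> \<tau> x \<le> \<tau>' x"
    proof eventually_elim
      case (elim x)
      show ?case
      proof
        assume xD: "x \<in> D k"
        show "\<tau> x \<le> \<tau>' x"
        proof (rule ennreal_le_epsilon)
          fix e :: real assume "0 < e"
          then obtain m where m: "2 * ennreal (1 / real (Suc m)) \<le> ennreal e" using two_eps by blast
          have "\<tau> x \<le> \<tau>' x + 2 * ennreal (1 / real (Suc m))" using elim xD by (meson linear less_imp_le)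
          also have "\<dots> \<le> \<tau>' x + ennreal e" using m by (rule add_left_mono)
          finally show "\<tau> x \<le> \<tau>' x + ennreal e" .
        qed
      qed
    qed
    have i2: "(\<integral>\<^sup>+x. indicator (D k) x * \<tau>' x \<partial>M) = (\<integral>\<^sup>+x. indicator (D k) x * \<tau> x \<partial>M)"
    proof -
      have "(\<integral>\<^sup>+x. indicator (D k) x * \<tau>' x \<partial>M) = (\<integral>\<^sup>+x. indicator (D k) x * nn_cond_exp M F \<tau>' x \<partial>M)"
        by (rule S.nn_cond_exp_intg[symmetric]) measurable
      also have "\<dots> = (\<integral>\<^sup>+x. indicator (D k) x * \<tau> x \<partial>M)"
        by (rule nn_integral_cong_AE) (use eqAE in auto)
      finally show ?thesis .
    qed
    have i3: "(\<integral>\<^sup>+x. indicator (D k) x * \<tau> x \<partial>M) \<noteq> \<infinity>"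
    proof -
      have "(\<integral>\<^sup>+x. indicator (D k) x * \<tau> x \<partial>M) \<le> (\<integral>\<^sup>+x. of_nat k \<partial>M)"
        by (intro nn_integral_mono) (auto simp: D_def indicator_def)
      also have "\<dots> = of_nat k" by (simp add: emeasure_space_1)
      finally show ?thesis by (metis ennreal_of_nat_neq_top top_unique infinity_ennreal_def)
    qed
    have "AE x in M. indicator (D k) x * \<tau>' x \<le> indicator (D k) x * \<tau> x"
    proof (rule ccontr)
      assume nn: "\<not> (AE x in M. indicator (D k) x * \<tau>' x \<le> indicator (D k) x * \<tau> x)"
      have "(\<integral>\<^sup>+x. indicator (D k) x * \<tau> x \<partial>M) < (\<integral>\<^sup>+x. indicator (D k) x * \<tau>' x \<partial>M)"
      proof (rule nn_integral_less)
        show "(\<lambda>x. indicator (D k) x * \<tau>' x) \<in> borel_measurable M" by measurable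
        show "(\<lambda>x. indicator (D k) x * \<tau> x) \<in> borel_measurable M" by measurable
        show "(\<integral>\<^sup>+x. indicator (D k) x * \<tau> x \<partial>M) \<noteq> \<infinity>" using i3 .
        show "AE x in M. indicator (D k) x * \<tau> x \<le> indicator (D k) x * \<tau>' x"
          using AEd by eventually_elim (auto simp: indicator_def)
        show "\<not> (AE x in M. indicator (D k) x * \<tau>' x \<le> indicator (D k) x * \<tau> x)" using nn .
      qed
      with i2 show False by simp
    qed
    with AEd show ?thesis
      by eventually_elim (auto simp: indicator_def split: if_splits)
  qed
  have C0': "AE x in M. \<forall>k. x \<notin> C k" using C0 by (simp add: AE_all_countable)
  have D0': "AE x in M. \<forall>k. x \<in> D k \<longrightarrow> \<tau>' x = \<tau> x" by (rule AE_all_countable[THEN iffD2]) (use D0 in blast)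
  have "AE x in M. \<tau> x = \<tau>' x"
    using AE3 fin C0' D0' AE_space
  proof eventually_elim
    case (elim x)
    show ?case
    proof (cases "\<tau> x < \<infinity>")
      case True
      then obtain k where k: "\<tau> x < of_nat k"
        using ennreal_Ex_less_of_nat by (auto simp: infinity_ennreal_def)
      show ?thesis
      proof (cases "h x = 0")
        case True
        with k elim(5) have "x \<in> C k" by (auto simp: C_def)
        with elim(3) show ?thesis by blast
      next
        case False
        with elim(1) \<open>\<tau> x < \<infinity>\<close> have "\<forall>m. g m x = 0" by blast
        with k elim(5) have "x \<in> D k" by (auto simp: D_def)
        with elim(4) show ?thesis by auto
      qed
    next
      case False
      with elim(2) show ?thesis by (auto simp: not_less top_unique infinity_ennreal_def)
    qed
  qed
  then have "distr M borel \<tau> = distr M borel \<tau>'"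
    by (intro distr_cong_AE) auto
  with marg H3 show False by simp
qed

end
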